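(* Let $(\gamma,\delta)$ be any pair of partitions. For each $1\le j\le l(\delta)$ let $$d_j=\#\{i:\ 2\le i\le l(\gamma),\ \gamma_i>\delta_j\}-\#\{i<j:\ \delta_i\text{ is unbalanced}\}.$$ Then $d_j\ge0$ for every $j$.
   Context: A partition is a finite nonincreasing sequence of positive integers (possibly empty); $l(\lambda)$ is its number of parts. Balanced parts: let $(\gamma,\delta)$ be a pair of partitions, with the convention $\gamma_j=0$ for $j>l(\gamma)$. The parts $\delta_1,\delta_2,\dots,\delta_{l(\delta)}$ are classified as balanced or unbalanced recursively in increasing order of index: $\delta_i$ is balanced if and only if $\gamma_{i+1}\le\delta_i$ and the number of indices $j$ with $2\le j\le l(\gamma)$ and $\gamma_j>\delta_i$ equals the number of indices $j<i$ for which $\delta_j$ is unbalanced; otherwise $\delta_i$ is unbalanced. *)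

theory Defs
  imports Main
begin

definition is_partition :: "nat list \<Rightarrow> bool" where
  "is_partition lam \<longleftrightarrow> sorted_wrt (\<ge>) lam \<and> (\<forall>x\<in>set lam. 0 < x)"

text \<open>1-indexed part, with value 0 beyond the length (and at index 0).\<close>
definition part :: "nat list \<Rightarrow> nat \<Rightarrow> nat" where
  "part lam i = (if 1 \<le> i \<and> i \<le> length lam then lam ! (i - 1) else 0)"

definition cnt_big :: "nat list \<Rightarrow> nat \<Rightarrow> nat" where
  "cnt_big gam x = card {j. 2 \<le> j \<and> j \<le> length gam \<and> part gam j > x}"

fun nunb :: "nat list \<Rightarrow> nat list \<Rightarrow> nat \<Rightarrow> nat" where
  "nunb gam del 0 = 0"
| "nunb gam del (Suc i) = nunb gam del i +
     (if 1 \<le> i \<and> \<not> (part gam (i + 1) \<le> part del i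
                        \<and> cnt_big gam (part del i) = nunb gam del i) then 1 else 0)"

definition balanced :: "nat list \<Rightarrow> nat list \<Rightarrow> nat \<Rightarrow> bool" where
  "balanced gam del i \<longleftrightarrow> part gam (i + 1) \<le> part del i \<and> cnt_big gam (part del i) = nunb gam del i"

lemma nunb_Suc_balanced:
  "nunb gam del (Suc i) = nunb gam del i + (if 1 \<le> i \<and> \<not> balanced gam del i then 1 else 0)"
  by (simp add: balanced_def)

end

theory Submission
  imports Defs
begin

lemma nunb_le: "nunb gam del j \<le> j - 1"
proof (induction j)
  case 0 then show ?case by simp
next
  case (Suc i) then show ?case by (cases "i = 0") auto
qed

lemma cnt_big_anti: "x \<le> y \<Longrightarrow> cnt_big gam y \<le> cnt_big gam x"
  unfolding cnt_big_def
  by (rule card_mono) (auto simp: finite_nat_set_iff_bounded_le)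

lemma part_mono:
  assumes "is_partition lam" "1 \<le> i" "i \<le> k" "k \<le> length lam"
  shows "part lam k \<le> part lam i"
proof (cases "i = k")
  case True then show ?thesis by simp
next
  case False
  have "sorted_wrt (\<ge>) lam" using assms(1) by (simp add: is_partition_def)
  then have "lam ! (i - 1) \<ge> lam ! (k - 1)"
    using sorted_wrt_nth_less[of "(\<ge>)" lam "i - 1" "k - 1"] assms False by auto
  then show ?thesis using assms by (simp add: part_def)
qed

lemma part_pos_len:
  assumes "part lam k > 0" shows "k \<le> length lam"
  using assms by (auto simp: part_def split: if_splits)

lemma cnt_big_ge:
  assumes "is_partition gam" "part gam (j + 1) > x" "1 \<le> j"
  shows "j \<le> cnt_big gam x"
proof -
  have len: "j + 1 \<le> length gam" using part_pos_len assms(2) by (metis gr_zeroI not_less0)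
  have "{2..j+1} \<subseteq> {i. 2 \<le> i \<and> i \<le> length gam \<and> part gam i > x}"
  proof
    fix i assume "i \<in> {2..j+1}"
    then have "part gam (j+1) \<le> part gam i" using part_mono[OF assms(1), of i "j+1"] len by auto
    then show "i \<in> {i. 2 \<le> i \<and> i \<le> length gam \<and> part gam i > x}"
      using \<open>i \<in> {2..j+1}\<close> len assms(2) by auto
  qed
  then have "card {2..j+1} \<le> cnt_big gam x"
    unfolding cnt_big_def by (rule card_mono[rotated]) (auto simp: finite_nat_set_iff_bounded_le)
  then show ?thesis by simp
qed

lemma main_nat:
  assumes "is_partition gam" "is_partition del"
  shows "1 \<le> j \<Longrightarrow> j \<le> length del \<Longrightarrow> nunb gam del j \<le> cnt_big gam (part del j)"
proof (induction j rule: nat_induct_at_least)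
  case base then show ?case by simp
next
  case (Suc j)
  have mono: "cnt_big gam (part del j) \<le> cnt_big gam (part del (Suc j))"
    by (rule cnt_big_anti, rule part_mono[OF assms(2)]) (use Suc in auto)
  have IH: "nunb gam del j \<le> cnt_big gam (part del j)" using Suc by simp
  show ?case
  proof (cases "balanced gam del j")
    case True
    then show ?thesis using IH mono Suc by (simp only: nunb_Suc_balanced) (use Suc in simp)
  next
    case False
    then consider "part gam (j + 1) > part del j"
      | "cnt_big gam (part del j) \<noteq> nunb gam del j"
      unfolding balanced_def by linarith
    then show ?thesis
    proof cases
      case 1
      have "part del (Suc j) \<le> part del j"
        by (rule part_mono[OF assms(2)]) (use Suc in auto)
      then have "part gam (j+1) > part del (Suc j)" using 1 by linarith
      then have "j \<le> cnt_big gam (part del (Suc j))" using cnt_big_ge[OF assms(1)] Suc by auto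
      moreover have "nunb gam del j \<le> j - 1" by (rule nunb_le)
      ultimately show ?thesis using False Suc by (simp only: nunb_Suc_balanced) (use Suc in simp)
    next
      case 2
      then show ?thesis using IH mono False Suc by (simp only: nunb_Suc_balanced) (use Suc in simp)
    qed
  qed
qed

theorem mainTheorem4:
  fixes gam del :: "nat list" and j :: nat
  assumes "is_partition gam" and "is_partition del"
    and "1 \<le> j" and "j \<le> length del"
  shows "int (cnt_big gam (part del j)) - int (nunb gam del j) \<ge> 0"
  using main_nat[OF assms] by simp

end
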